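(* Let $s\ge1$ and $n\ge1$ be integers, $\Sigma=\{-s,\dots,-1,0,1,\dots,s\}$ and $\Sigma_*=\Sigma\setminus\{0\}$. Every string ${\bf t}\in\Sigma^n$ is equivalent to one and only one string of the form $x_1x_2\cdots x_k\underbrace{0\cdots0}_{n-k}$ with $0\le k\le n$, $x_i\in\Sigma_*$ for all $i$, and such that there is no index $i$ with $x_i=m\in\{1,\dots,s\}$ and $x_{i+1}=-m$.
   Context: The local moves on strings in $\Sigma^n$ are: replace an adjacent pair $(0,m)$ by $(m,0)$ or vice versa, for any $m\in\Sigma_*$; and replace an adjacent pair $(0,0)$ by $(m,-m)$ or vice versa, for any $m\in\{1,\dots,s\}$. Two strings are equivalent if one can be obtained from the other by a finite sequence of local moves. *)

theory Defs
  imports Main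
begin

definition Sigma :: "nat \<Rightarrow> int set" where
  "Sigma s = {- int s .. int s}"

definition Sigma_star :: "nat \<Rightarrow> int set" where
  "Sigma_star s = Sigma s - {0}"

definition pair_move :: "nat \<Rightarrow> int \<times> int \<Rightarrow> int \<times> int \<Rightarrow> bool" where
  "pair_move s p q \<longleftrightarrow>
     (\<exists>m \<in> Sigma_star s. (p = (0, m) \<and> q = (m, 0)) \<or> (p = (m, 0) \<and> q = (0, m))) \<or>
     (\<exists>m \<in> {1 .. int s}. (p = (0, 0) \<and> q = (m, -m)) \<or> (p = (m, -m) \<and> q = (0, 0)))"

definition local_move :: "nat \<Rightarrow> int list \<Rightarrow> int list \<Rightarrow> bool" where
  "local_move s u v \<longleftrightarrow>
     (\<exists>xs ys a b c d. u = xs @ [a, b] @ ys \<and> v = xs @ [c, d] @ ys \<and> pair_move s (a, b) (c, d))"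

definition equiv_str :: "nat \<Rightarrow> int list \<Rightarrow> int list \<Rightarrow> bool" where
  "equiv_str s u v \<longleftrightarrow> (local_move s)\<^sup>*\<^sup>* u v"

definition normal_form :: "nat \<Rightarrow> nat \<Rightarrow> int list \<Rightarrow> bool" where
  "normal_form s n w \<longleftrightarrow>
     (\<exists>xs k. k \<le> n \<and> length xs = k \<and> w = xs @ replicate (n - k) 0 \<and>
        set xs \<subseteq> Sigma_star s \<and>
        \<not> (\<exists>i. i + 1 < k \<and> xs ! i \<in> {1 .. int s} \<and> xs ! (i + 1) = - (xs ! i)))"

end

theory Submission
  imports Defs
begin

definition cons_red :: "int \<Rightarrow> int list \<Rightarrow> int list" where
  "cons_red x ys = (if x = 0 then ys else (case ys of [] \<Rightarrow> [x]
      | y # ys' \<Rightarrow> (if 0 < x \<and> y = - x then ys' else x # ys)))"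

definition red :: "int list \<Rightarrow> int list" where
  "red xs = foldr cons_red xs []"

fun reduced :: "int list \<Rightarrow> bool" where
  "reduced [] = True"
| "reduced [x] = (x \<noteq> 0)"
| "reduced (x # y # r) = (x \<noteq> 0 \<and> \<not> (0 < x \<and> y = - x) \<and> reduced (y # r))"

lemma red_Cons[simp]: "red (x # xs) = cons_red x (red xs)"
  by (simp add: red_def)

lemma red_Nil[simp]: "red [] = []"
  by (simp add: red_def)

lemma red_append: "red (xs @ ys) = foldr cons_red xs (red ys)"
  by (simp add: red_def)

lemma red_zeros: "red (replicate k 0) = []"
  by (induction k) (auto simp: cons_red_def)

lemma reduced_tl: "reduced (y # r) \<Longrightarrow> reduced r"
  by (cases r) auto

lemma cons_red_reduced: "reduced L \<Longrightarrow> reduced (cons_red x L)"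
  by (cases L) (auto simp: cons_red_def intro: reduced_tl)

lemma red_reduced: "reduced (red t)"
  by (induction t) (auto intro: cons_red_reduced)

lemma cons_red_set: "set (cons_red x L) \<subseteq> set L \<union> ({x} - {0})"
  by (cases L) (auto simp: cons_red_def)

lemma red_set: "set (red t) \<subseteq> set t - {0}"
proof (induction t)
  case Nil then show ?case by simp
next
  case (Cons x t)
  then show ?case using cons_red_set[of x "red t"] by auto
qed

lemma red_length: "length (red t) \<le> length t"
proof (induction t)
  case Nil then show ?case by simp
next
  case (Cons x t)
  have "length (cons_red x (red t)) \<le> Suc (length (red t))"
    by (cases "red t") (auto simp: cons_red_def)
  then show ?case using Cons by simp
qed

lemma reduced_fix: "reduced xs \<Longrightarrow> red xs = xs"
proof (induction xs rule: reduced.induct)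
  case 1 then show ?case by simp
next
  case (2 x) then show ?case by (simp add: cons_red_def)
next
  case (3 x y r) then show ?case by (simp add: cons_red_def)
qed

lemma reduced_iff: "reduced xs \<longleftrightarrow> 0 \<notin> set xs \<and>
   \<not> (\<exists>i. i + 1 < length xs \<and> 0 < xs ! i \<and> xs ! (i + 1) = - (xs ! i))"
proof (induction xs rule: reduced.induct)
  case 1 then show ?case by simp
next
  case (2 x) then show ?case by simp
next
  case (3 x y r)
  show ?case
  proof
    assume h: "reduced (x # y # r)"
    then have A: "0 \<notin> set (y # r) \<and>
      \<not> (\<exists>i. i + 1 < length (y # r) \<and> 0 < (y # r) ! i \<and> (y # r) ! (i + 1) = - ((y # r) ! i))"
      using 3 by simp
    show "0 \<notin> set (x # y # r) \<and>
      \<not> (\<exists>i. i + 1 < length (x # y # r) \<and> 0 < (x # y # r) ! i \<and> (x # y # r) ! (i + 1) = - ((x # y # r) ! i))"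
    proof (intro conjI notI)
      show "0 \<in> set (x # y # r) \<Longrightarrow> False" using h A by auto
    next
      assume "\<exists>i. i + 1 < length (x # y # r) \<and> 0 < (x # y # r) ! i \<and> (x # y # r) ! (i + 1) = - ((x # y # r) ! i)"
      then obtain i where i: "i + 1 < length (x # y # r)" "0 < (x # y # r) ! i" "(x # y # r) ! (i + 1) = - ((x # y # r) ! i)" by blast
      show False
      proof (cases i)
        case 0 then show False using i h by simp
      next
        case (Suc j) then show False using i A by auto
      qed
    qed
  next
    assume h: "0 \<notin> set (x # y # r) \<and>
      \<not> (\<exists>i. i + 1 < length (x # y # r) \<and> 0 < (x # y # r) ! i \<and> (x # y # r) ! (i + 1) = - ((x # y # r) ! i))"
    have "\<not> (0 < x \<and> y = - x)"
    proof
      assume "0 < x \<and> y = - x"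
      then show False using h by (metis One_nat_def add_Suc_right length_Cons nth_Cons_0 nth_Cons_Suc zero_less_Suc add_0 less_add_Suc1 plus_1_eq_Suc)
    qed
    moreover have "reduced (y # r)"
    proof -
      have "\<not> (\<exists>i. i + 1 < length (y # r) \<and> 0 < (y # r) ! i \<and> (y # r) ! (i + 1) = - ((y # r) ! i))"
      proof
        assume "\<exists>i. i + 1 < length (y # r) \<and> 0 < (y # r) ! i \<and> (y # r) ! (i + 1) = - ((y # r) ! i)"
        then obtain i where i: "i + 1 < length (y # r)" "0 < (y # r) ! i" "(y # r) ! (i + 1) = - ((y # r) ! i)" by blast
        have "Suc i + 1 < length (x # y # r) \<and> 0 < (x # y # r) ! Suc i \<and> (x # y # r) ! (Suc i + 1) = - ((x # y # r) ! Suc i)"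
          using i by simp
        then show False using h by blast
      qed
      then show ?thesis using 3 h by simp
    qed
    ultimately show "reduced (x # y # r)" using h by simp
  qed
qed

lemma pair_red:
  assumes "pair_move s (a, b) (c, d)"
  shows "cons_red a (cons_red b L) = cons_red c (cons_red d L)"
proof -
  have A: "cons_red 0 L' = L'" for L' by (simp add: cons_red_def)
  have B: "m > 0 \<Longrightarrow> cons_red m (cons_red (-m) L) = L" for m
    by (cases L) (simp_all add: cons_red_def)
  from assms consider (p1) m where "m \<noteq> 0" "a = 0" "b = m" "c = m" "d = 0"
    | (p2) m where "m \<noteq> 0" "a = m" "b = 0" "c = 0" "d = m"
    | (p3) m where "m > 0" "a = 0" "b = 0" "c = m" "d = -m"
    | (p4) m where "m > 0" "a = m" "b = -m" "c = 0" "d = 0"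
    unfolding pair_move_def Sigma_star_def by auto
  then show ?thesis
  proof cases
    case p1 then show ?thesis by (simp add: A)
  next
    case p2 then show ?thesis by (simp add: A)
  next
    case p3 then show ?thesis by (simp add: A B)
  next
    case p4 then show ?thesis by (simp add: A B)
  qed
qed

lemma move_red: "local_move s u v \<Longrightarrow> red u = red v"
  unfolding local_move_def
  by (auto simp: red_append pair_red)

lemma star_red: "(local_move s)\<^sup>*\<^sup>* u v \<Longrightarrow> red u = red v"
  by (induction rule: rtranclp_induct) (auto dest: move_red)

lemma lm_ctx: "local_move s u v \<Longrightarrow> local_move s (p @ u @ q) (p @ v @ q)"
  unfolding local_move_def
proof (elim exE conjE)
  fix xs ys a b c d
  assume "u = xs @ [a, b] @ ys" "v = xs @ [c, d] @ ys" "pair_move s (a, b) (c, d)"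
  then show "\<exists>xs ys a b c d. p @ u @ q = xs @ [a, b] @ ys \<and> p @ v @ q = xs @ [c, d] @ ys \<and> pair_move s (a, b) (c, d)"
    by (intro exI[of _ "p @ xs"] exI[of _ "ys @ q"]) auto
qed

lemma star_ctx: "(local_move s)\<^sup>*\<^sup>* u v \<Longrightarrow> (local_move s)\<^sup>*\<^sup>* (p @ u @ q) (p @ v @ q)"
proof (induction rule: rtranclp_induct)
  case base then show ?case by simp
next
  case (step y z)
  then show ?case using lm_ctx[of s y z p q] by (meson rtranclp.rtrancl_into_rtrancl)
qed

lemma star_cons: "(local_move s)\<^sup>*\<^sup>* u v \<Longrightarrow> (local_move s)\<^sup>*\<^sup>* (x # u) (x # v)"
  using star_ctx[of s u v "[x]" "[]"] by simp

lemma bubble: "set r \<subseteq> Sigma_star s \<Longrightarrow> (local_move s)\<^sup>*\<^sup>* (0 # r @ ys) (r @ 0 # ys)"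
proof (induction r)
  case Nil then show ?case by simp
next
  case (Cons y r)
  have "local_move s (0 # y # r @ ys) (y # 0 # r @ ys)"
    unfolding local_move_def
    apply (rule exI[of _ "[]"], rule exI[of _ "r @ ys"], rule exI[of _ 0], rule exI[of _ y],
           rule exI[of _ y], rule exI[of _ 0])
    using Cons.prems by (auto simp: pair_move_def)
  moreover have "(local_move s)\<^sup>*\<^sup>* (y # 0 # r @ ys) (y # r @ 0 # ys)"
    using Cons by (auto intro: star_cons)
  ultimately show ?case by (simp add: converse_rtranclp_into_rtranclp)
qed

lemma reach: "set t \<subseteq> Sigma s \<Longrightarrow>
  (local_move s)\<^sup>*\<^sup>* t (red t @ replicate (length t - length (red t)) 0)"
proof (induction t)
  case Nil then show ?case by simp
next
  case (Cons x t)
  define r where "r = red t"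
  define k where "k = length t - length r"
  have rS: "set r \<subseteq> Sigma_star s" using red_set[of t] Cons.prems
    by (auto simp: r_def Sigma_star_def)
  have rl: "length r \<le> length t" using red_length[of t] by (simp add: r_def)
  have rr: "reduced r" using red_reduced by (simp add: r_def)
  have xS: "x \<in> Sigma s" using Cons.prems by simp
  have st1: "(local_move s)\<^sup>*\<^sup>* (x # t) (x # r @ replicate k 0)"
    using Cons by (auto simp: r_def k_def intro: star_cons)
  show ?case
  proof (cases "x = 0")
    case True
    then have "red (x # t) = r" by (simp add: r_def cons_red_def)
    moreover have "(local_move s)\<^sup>*\<^sup>* (x # r @ replicate k 0) (r @ replicate (Suc k) 0)"
      using bubble[OF rS, of "replicate k 0"] True by simp
    moreover have "length (x # t) - length r = Suc k" using rl by (simp add: k_def)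
    ultimately show ?thesis using st1 by (metis rtranclp_trans)
  next
    case False
    show ?thesis
    proof (cases "\<exists>r'. r = (- x) # r' \<and> 0 < x")
      case True
      then obtain r' where r': "r = (- x) # r'" "0 < x" by blast
      have red': "red (x # t) = r'" using r' by (simp add: r_def cons_red_def)
      have r'S: "set r' \<subseteq> Sigma_star s" using rS r' by simp
      have "local_move s (x # r @ replicate k 0) (0 # 0 # r' @ replicate k 0)"
        unfolding local_move_def
        apply (rule exI[of _ "[]"], rule exI[of _ "r' @ replicate k 0"], rule exI[of _ x], rule exI[of _ "-x"],
           rule exI[of _ 0], rule exI[of _ 0])
        using r' xS by (auto simp: pair_move_def Sigma_def)
      moreover have "(local_move s)\<^sup>*\<^sup>* (0 # 0 # r' @ replicate k 0) (0 # r' @ 0 # replicate k 0)"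
        using bubble[OF r'S, of "replicate k 0"] by (rule star_cons)
      moreover have "(local_move s)\<^sup>*\<^sup>* (0 # r' @ 0 # replicate k 0) (r' @ 0 # 0 # replicate k 0)"
        using bubble[OF r'S, of "0 # replicate k 0"] .
      moreover have "length (x # t) - length r' = Suc (Suc k)" using rl r' by (simp add: k_def)
      ultimately show ?thesis using st1 red'
        by (metis (no_types, lifting) converse_rtranclp_into_rtranclp replicate_Suc rtranclp_trans)
    next
      case nc: False
      have "red (x # t) = x # r"
        using False nc by (cases r) (auto simp: r_def cons_red_def)
      moreover have "length (x # t) - length (x # r) = k" by (simp add: k_def)
      ultimately show ?thesis using st1 by simp
    qed
  qed
qed

lemma nf_red:
  assumes "normal_form s n w" "length w = n"
  shows "w = red w @ replicate (n - length (red w)) 0"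
proof -
  obtain xs k where h: "k \<le> n" "length xs = k" "w = xs @ replicate (n - k) 0"
    "set xs \<subseteq> Sigma_star s"
    "\<not> (\<exists>i. i + 1 < k \<and> xs ! i \<in> {1 .. int s} \<and> xs ! (i + 1) = - (xs ! i))"
    using assms(1) unfolding normal_form_def by blast
  have "\<not> (\<exists>i. i + 1 < length xs \<and> 0 < xs ! i \<and> xs ! (i + 1) = - (xs ! i))"
  proof
    assume "\<exists>i. i + 1 < length xs \<and> 0 < xs ! i \<and> xs ! (i + 1) = - (xs ! i)"
    then obtain i where i: "i + 1 < length xs" "0 < xs ! i" "xs ! (i + 1) = - (xs ! i)" by blast
    have "xs ! i \<in> set xs" using i(1) by simp
    then have "xs ! i \<in> {1 .. int s}" using h(4) i(2) by (auto simp: Sigma_star_def Sigma_def)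
    then show False using h(5) i h(2) by blast
  qed
  moreover have "0 \<notin> set xs" using h(4) by (auto simp: Sigma_star_def)
  ultimately have "reduced xs" using reduced_iff by blast
  then have "red w = xs" using h(3) by (simp only: red_append red_zeros flip: red_def) (simp add: reduced_fix)
  then show ?thesis using h by simp
qed

theorem lemma5:
  fixes s n :: nat and t :: "int list"
  assumes "s \<ge> 1" and "n \<ge> 1"
    and "length t = n" and "set t \<subseteq> Sigma s"
  shows "\<exists>!w. length w = n \<and> set w \<subseteq> Sigma s \<and> normal_form s n w \<and> equiv_str s t w"
proof (rule ex1I)
  let ?w = "red t @ replicate (n - length (red t)) 0"
  have rl: "length (red t) \<le> n" using red_length[of t] assms by simp
  have rS: "set (red t) \<subseteq> Sigma_star s" using red_set[of t] assms(4)
    by (auto simp: Sigma_star_def)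
  have z: "0 \<in> Sigma s" by (simp add: Sigma_def)
  have "normal_form s n ?w"
    unfolding normal_form_def
  proof (intro exI conjI)
    show "length (red t) \<le> n" by (fact rl)
    show "set (red t) \<subseteq> Sigma_star s" by (fact rS)
    show "\<not> (\<exists>i. i + 1 < length (red t) \<and> red t ! i \<in> {1 .. int s} \<and> red t ! (i + 1) = - (red t ! i))"
      using red_reduced[of t] reduced_iff[of "red t"] by auto
  qed simp_all
  moreover have "set ?w \<subseteq> Sigma s" using rS z by (auto simp: Sigma_star_def)
  moreover have "equiv_str s t ?w" using reach[OF assms(4)] assms(3) by (simp add: equiv_str_def)
  ultimately show "length ?w = n \<and> set ?w \<subseteq> Sigma s \<and> normal_form s n ?w \<and> equiv_str s t ?w"
    using rl by simp
next
  fix w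
  assume h: "length w = n \<and> set w \<subseteq> Sigma s \<and> normal_form s n w \<and> equiv_str s t w"
  then have "red t = red w" by (auto simp: equiv_str_def intro: star_red)
  then show "w = red t @ replicate (n - length (red t)) 0" using nf_red[of s n w] h by simp
qed

end
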